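(* Let $X$ be a complex Banach space, $P:\mathbb{C}^n\to X$ an $m$-homogeneous tetrahedral polynomial with associated symmetric $m$-linear operator $M$, and fix $\lambda\in\mathbb{C}^n$. For every $1\le p<\infty$, \[ \big(\mathbb{E}_w\|M(\lambda w,w,\ldots,w)\|^p\big)^{1/p}\le\sqrt{em}\,\big(\mathbb{E}_{\varepsilon,w}\|M(\lambda\varepsilon w,w,\ldots,w)\|^p\big)^{1/p}. \]
   Context: $P(z)=\sum_{A\subseteq[n],|A|=m}x_Az_A$, $z_A=\prod_{k\in A}z_k$; $M$ is the unique symmetric $m$-linear map with $M(z,\dots,z)=P(z)$. $w$ is a random vector with independent Steinhaus coordinates (uniform on the unit circle), $\varepsilon$ an independent random vector with independent Rademacher coordinates; products of vectors such as $\lambda w$ and $\lambda\varepsilon w$ are coordinatewise. *)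

theory Defs
  imports "HOL-Probability.Probability"
begin

text \<open>Complex Banach spaces: the distribution has no class of complex vector spaces,
so we add a complex scalar multiplication compatible with the real one and the norm.\<close>

class complex_banach = banach +
  fixes scaleC :: "complex \<Rightarrow> 'a \<Rightarrow> 'a" (infixr "*\<^sub>C" 75)
  assumes scaleC_add_right: "a *\<^sub>C (x + y) = a *\<^sub>C x + a *\<^sub>C y"
    and scaleC_add_left: "(a + b) *\<^sub>C x = a *\<^sub>C x + b *\<^sub>C x"
    and scaleC_scaleC: "a *\<^sub>C (b *\<^sub>C x) = (a * b) *\<^sub>C x"
    and scaleC_one: "1 *\<^sub>C x = x"
    and scaleC_of_real: "complex_of_real r *\<^sub>C x = r *\<^sub>R x"
    and norm_scaleC: "norm (a *\<^sub>C x) = cmod a * norm x"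

text \<open>Vectors of \<open>\<complex>^n\<close> are functions \<open>'n \<Rightarrow> complex\<close> on a finite index type \<open>'n\<close>.\<close>

definition steinhaus :: "complex measure" where
  "steinhaus = distr (uniform_measure lborel {0..2*pi}) borel cis"

definition rademacher :: "complex measure" where
  "rademacher = measure_pmf (pmf_of_set {-1, 1})"

definition tetra_poly :: "nat \<Rightarrow> ('n::finite set \<Rightarrow> 'a::complex_banach) \<Rightarrow> ('n \<Rightarrow> complex) \<Rightarrow> 'a" where
  "tetra_poly m x z = (\<Sum>A\<in>{A. card A = m}. (\<Prod>k\<in>A. z k) *\<^sub>C x A)"

text \<open>Symmetric m-linear map on \<open>(\<complex>^n)^m\<close>; arguments are indexed by \<open>{..<m}\<close>.\<close>
definition sym_multilinear :: "nat \<Rightarrow> ((nat \<Rightarrow> ('n \<Rightarrow> complex)) \<Rightarrow> 'a::complex_banach) \<Rightarrow> bool" where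
  "sym_multilinear m M \<longleftrightarrow>
     (\<forall>u v. (\<forall>k<m. u k = v k) \<longrightarrow> M u = M v) \<and>
     (\<forall>k<m. \<forall>u a v v'. M (u(k := (\<lambda>i. a * v i + v' i))) = a *\<^sub>C M (u(k := v)) + M (u(k := v'))) \<and>
     (\<forall>\<sigma> u. \<sigma> permutes {..<m} \<longrightarrow> M (u \<circ> \<sigma>) = M u)"

end

theory Submission
  imports Defs
begin

lemma scaleC_zero_left[simp]: "0 *\<^sub>C (x::'a::complex_banach) = 0"
  using scaleC_add_left[of 0 0 x] by simp
lemma scaleC_zero_right[simp]: "a *\<^sub>C (0::'a::complex_banach) = 0"
  using scaleC_add_right[of a 0 0] by simp
lemma scaleC_minus_left: "(- a) *\<^sub>C (x::'a::complex_banach) = - (a *\<^sub>C x)"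
  using scaleC_add_left[of a "-a" x] by (intro minus_unique[symmetric]) simp
lemma scaleC_diff_left: "(a - b) *\<^sub>C (x::'a::complex_banach) = a *\<^sub>C x - b *\<^sub>C x"
  using scaleC_add_left[of a "-b" x] scaleC_minus_left[of b x] by simp
lemma scaleC_sum_left: "(\<Sum>i\<in>I. f i) *\<^sub>C (x::'a::complex_banach) = (\<Sum>i\<in>I. f i *\<^sub>C x)"
  by (induction I rule: infinite_finite_induct) (auto simp: scaleC_add_left)
lemma scaleC_sum_right: "a *\<^sub>C (\<Sum>i\<in>I. f i) = (\<Sum>i\<in>I. a *\<^sub>C (f i::'a::complex_banach))"
  by (induction I rule: infinite_finite_induct) (auto simp: scaleC_add_right)
lemma bounded_linear_scaleC_left: "bounded_linear (\<lambda>a. a *\<^sub>C (x::'a::complex_banach))"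
proof (rule bounded_linear_intro[where K="norm x"])
  show "(b + c) *\<^sub>C x = b *\<^sub>C x + c *\<^sub>C x" for b c by (rule scaleC_add_left)
  show "(r *\<^sub>R b) *\<^sub>C x = r *\<^sub>R (b *\<^sub>C x)" for r b
    by (simp add: scaleR_conv_of_real scaleC_scaleC[symmetric] scaleC_of_real)
  show "norm (b *\<^sub>C x) \<le> norm b * norm x" for b by (simp add: norm_scaleC)
qed

lemma borel_measurable_scaleC[measurable]:
  fixes v :: "'a::complex_banach"
  assumes "f \<in> borel_measurable M"
  shows "(\<lambda>x. f x *\<^sub>C v) \<in> borel_measurable M"
proof -
  have "continuous_on UNIV (\<lambda>a. a *\<^sub>C v)"
    using bounded_linear_scaleC_left linear_continuous_on by blast
  then have "(\<lambda>a. a *\<^sub>C v) \<in> borel_measurable borel"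
    using borel_measurable_continuous_onI by blast
  then show ?thesis using assms by measurable
qed

lemma ml_lin:
  assumes "sym_multilinear m M" "k < m"
  shows "M (u(k := (\<lambda>i. a * v i + v' i))) = a *\<^sub>C M (u(k := v)) + M (u(k := v'))"
  using assms unfolding sym_multilinear_def by blast

lemma ml_dep:
  assumes "sym_multilinear m M" "\<And>k. k < m \<Longrightarrow> u k = v k"
  shows "M u = M v"
  using assms unfolding sym_multilinear_def by blast

lemma ml_sym:
  assumes "sym_multilinear m M" "\<sigma> permutes {..<m}"
  shows "M (u \<circ> \<sigma>) = M u"
  using assms unfolding sym_multilinear_def by blast

lemma ml_expand:
  fixes M :: "(nat \<Rightarrow> ('n \<Rightarrow> complex)) \<Rightarrow> 'a::complex_banach"
  assumes ml: "sym_multilinear m M"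
  shows "j \<le> m \<Longrightarrow> M (\<lambda>i. if i < j then (\<lambda>l. t * u l + z l) else y i) =
     (\<Sum>S\<in>Pow {..<j}. t ^ card S *\<^sub>C M (\<lambda>i. if i \<in> S then u else if i < j then z else y i))"
proof (induction j arbitrary: y)
  case 0
  then show ?case by (simp add: scaleC_one)
next
  case (Suc j)
  define V where "V = (\<lambda>i. if i < j then (\<lambda>l. t * u l + z l) else y i)"
  have jm: "j < m" using Suc by simp
  have "M (\<lambda>i. if i < Suc j then (\<lambda>l. t * u l + z l) else y i) = M (V(j := (\<lambda>l. t * u l + z l)))"
    by (intro arg_cong[where f=M]) (auto simp: V_def fun_eq_iff)
  also have "\<dots> = t *\<^sub>C M (V(j := u)) + M (V(j := z))"
    by (rule ml_lin[OF ml jm])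
  also have "V(j := u) = (\<lambda>i. if i < j then (\<lambda>l. t * u l + z l) else (y(j:=u)) i)"
    by (auto simp: V_def fun_eq_iff)
  also have "V(j := z) = (\<lambda>i. if i < j then (\<lambda>l. t * u l + z l) else (y(j:=z)) i)"
    by (auto simp: V_def fun_eq_iff)
  finally have L: "M (\<lambda>i. if i < Suc j then (\<lambda>l. t * u l + z l) else y i) =
     t *\<^sub>C (\<Sum>S\<in>Pow {..<j}. t ^ card S *\<^sub>C M (\<lambda>i. if i \<in> S then u else if i < j then z else (y(j:=u)) i))
     + (\<Sum>S\<in>Pow {..<j}. t ^ card S *\<^sub>C M (\<lambda>i. if i \<in> S then u else if i < j then z else (y(j:=z)) i))"
    using Suc.IH[of "y(j:=u)"] Suc.IH[of "y(j:=z)"] Suc.prems by simp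
  have P: "Pow {..<Suc j} = Pow {..<j} \<union> insert j ` Pow {..<j}"
    by (simp add: lessThan_Suc Pow_insert)
  have disj: "Pow {..<j} \<inter> insert j ` Pow {..<j} = {}" by auto
  have inj: "inj_on (insert j) (Pow {..<j})"
    by (rule inj_onI) (metis Pow_iff insert_ident lessThan_iff less_irrefl subsetD)
  have "(\<Sum>S\<in>Pow {..<Suc j}. t ^ card S *\<^sub>C M (\<lambda>i. if i \<in> S then u else if i < Suc j then z else y i))
    = (\<Sum>S\<in>Pow {..<j}. t ^ card S *\<^sub>C M (\<lambda>i. if i \<in> S then u else if i < Suc j then z else y i))
    + (\<Sum>S\<in>Pow {..<j}. t ^ card (insert j S) *\<^sub>C M (\<lambda>i. if i \<in> insert j S then u else if i < Suc j then z else y i))"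
    unfolding P by (subst sum.union_disjoint) (auto simp: sum.reindex[OF inj])
  also have "(\<Sum>S\<in>Pow {..<j}. t ^ card S *\<^sub>C M (\<lambda>i. if i \<in> S then u else if i < Suc j then z else y i))
     = (\<Sum>S\<in>Pow {..<j}. t ^ card S *\<^sub>C M (\<lambda>i. if i \<in> S then u else if i < j then z else (y(j:=z)) i))"
  proof (rule sum.cong[OF refl])
    fix S assume "S \<in> Pow {..<j}"
    then show "t ^ card S *\<^sub>C M (\<lambda>i. if i \<in> S then u else if i < Suc j then z else y i) =
      t ^ card S *\<^sub>C M (\<lambda>i. if i \<in> S then u else if i < j then z else (y(j:=z)) i)"
      by (intro arg_cong[where f="\<lambda>X. t ^ card S *\<^sub>C M X"]) (auto simp: fun_eq_iff)
  qed
  also have "(\<Sum>S\<in>Pow {..<j}. t ^ card (insert j S) *\<^sub>C M (\<lambda>i. if i \<in> insert j S then u else if i < Suc j then z else y i))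
     = t *\<^sub>C (\<Sum>S\<in>Pow {..<j}. t ^ card S *\<^sub>C M (\<lambda>i. if i \<in> S then u else if i < j then z else (y(j:=u)) i))"
    unfolding scaleC_sum_right
  proof (rule sum.cong[OF refl])
    fix S assume S: "S \<in> Pow {..<j}"
    then have jS: "j \<notin> S" "finite S" by (auto intro: finite_subset)
    have "(\<lambda>i. if i \<in> insert j S then u else if i < Suc j then z else y i) =
          (\<lambda>i. if i \<in> S then u else if i < j then z else (y(j:=u)) i)"
      using S by (auto simp: fun_eq_iff)
    then show "t ^ card (insert j S) *\<^sub>C M (\<lambda>i. if i \<in> insert j S then u else if i < Suc j then z else y i) =
      t *\<^sub>C (t ^ card S *\<^sub>C M (\<lambda>i. if i \<in> S then u else if i < j then z else (y(j:=u)) i))"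
      using jS by (simp add: scaleC_scaleC)
  qed
  finally show ?case using L by (simp add: add.commute)
qed

lemma deriv_pow_scaleC:
  "((\<lambda>t::real. (complex_of_real t) ^ k *\<^sub>C (v::'a::complex_banach)) has_vector_derivative (if k = 1 then v else 0)) (at 0)"
proof -
  have e: "(\<lambda>t::real. (complex_of_real t) ^ k *\<^sub>C v) = (\<lambda>t. t ^ k *\<^sub>R v)"
    by (simp add: fun_eq_iff scaleC_of_real flip: of_real_power)
  have "((\<lambda>t::real. t ^ k *\<^sub>R v) has_vector_derivative ((0::real) ^ k *\<^sub>R 0 + (of_nat k * 0 ^ (k - 1)) *\<^sub>R v)) (at 0)"
    by (intro has_vector_derivative_scaleR has_vector_derivative_const) (auto intro!: derivative_eq_intros)
  moreover have "(0::real) ^ k *\<^sub>R 0 + (of_nat k * 0 ^ (k - 1)) *\<^sub>R v = (if k = 1 then v else 0)"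
    by (cases k) auto
  ultimately show ?thesis unfolding e by simp
qed

lemma deriv_sum_pow_scaleC:
  "((\<lambda>t::real. \<Sum>i\<in>I. (complex_of_real t) ^ k i *\<^sub>C (v i::'a::complex_banach)) has_vector_derivative
     (\<Sum>i\<in>I. if k i = 1 then v i else 0)) (at 0)"
  by (intro has_vector_derivative_sum deriv_pow_scaleC)

definition Qf :: "nat \<Rightarrow> ('n::finite set \<Rightarrow> 'a::complex_banach) \<Rightarrow> ('n \<Rightarrow> complex) \<Rightarrow> ('n \<Rightarrow> complex) \<Rightarrow> 'a" where
  "Qf m x u z = (\<Sum>A\<in>{A. card A = m}. (\<Sum>k\<in>A. u k * (\<Prod>j\<in>A-{k}. z j)) *\<^sub>C x A)"

lemma L1:
  fixes M :: "(nat \<Rightarrow> ('n::finite \<Rightarrow> complex)) \<Rightarrow> 'a::complex_banach"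
  assumes ml: "sym_multilinear m M" and m1: "m \<ge> 1"
    and P: "\<forall>z. M (\<lambda>_. z) = tetra_poly m x z"
  shows "of_nat m *\<^sub>C M ((\<lambda>_. z)(0 := u)) = Qf m x u z"
proof -
  define N where "N S = M (\<lambda>i. if i \<in> S then u else z)" for S
  define \<phi> where "\<phi> t = M (\<lambda>_. (\<lambda>l. complex_of_real t * u l + z l))" for t
  have exp1: "\<phi> t = (\<Sum>S\<in>Pow {..<m}. (complex_of_real t) ^ card S *\<^sub>C N S)" for t
  proof -
    have "\<phi> t = M (\<lambda>i. if i < m then (\<lambda>l. complex_of_real t * u l + z l) else z)"
      unfolding \<phi>_def by (rule ml_dep[OF ml]) simp
    also have "\<dots> = (\<Sum>S\<in>Pow {..<m}. (complex_of_real t) ^ card S *\<^sub>C M (\<lambda>i. if i \<in> S then u else if i < m then z else z))"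
      by (rule ml_expand[OF ml, where j=m and t="complex_of_real t" and u=u and z=z and y="\<lambda>_. z"]) simp
    also have "\<dots> = (\<Sum>S\<in>Pow {..<m}. (complex_of_real t) ^ card S *\<^sub>C N S)"
      by (intro sum.cong refl) (simp add: N_def cong: if_cong)
    finally show ?thesis .
  qed
  have exp2: "\<phi> t = (\<Sum>A\<in>{A. card A = m}. \<Sum>B\<in>Pow A. (complex_of_real t) ^ card B *\<^sub>C
       (((\<Prod>l\<in>B. u l) * (\<Prod>l\<in>A-B. z l)) *\<^sub>C x A))" for t
  proof -
    have "\<phi> t = (\<Sum>A\<in>{A. card A = m}. (\<Prod>l\<in>A. complex_of_real t * u l + z l) *\<^sub>C x A)"
      using P unfolding \<phi>_def tetra_poly_def by simp
    also have "\<dots> = (\<Sum>A\<in>{A. card A = m}. \<Sum>B\<in>Pow A. (complex_of_real t) ^ card B *\<^sub>C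
       (((\<Prod>l\<in>B. u l) * (\<Prod>l\<in>A-B. z l)) *\<^sub>C x A))"
    proof (rule sum.cong[OF refl])
      fix A :: "'n set"
      have fA: "finite A" by simp
      have "(\<Prod>l\<in>A. complex_of_real t * u l + z l) = (\<Sum>B\<in>Pow A. (\<Prod>l\<in>B. complex_of_real t * u l) * (\<Prod>l\<in>A-B. z l))"
        by (rule prod_add[OF fA])
      also have "\<dots> = (\<Sum>B\<in>Pow A. (complex_of_real t) ^ card B * ((\<Prod>l\<in>B. u l) * (\<Prod>l\<in>A-B. z l)))"
        by (intro sum.cong refl) (simp add: prod.distrib)
      finally show "(\<Prod>l\<in>A. complex_of_real t * u l + z l) *\<^sub>C x A = (\<Sum>B\<in>Pow A. (complex_of_real t) ^ card B *\<^sub>C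
       (((\<Prod>l\<in>B. u l) * (\<Prod>l\<in>A-B. z l)) *\<^sub>C x A))"
        by (simp add: scaleC_sum_left scaleC_scaleC)
    qed
    finally show ?thesis .
  qed
  have d1: "(\<phi> has_vector_derivative (\<Sum>S\<in>Pow {..<m}. if card S = 1 then N S else 0)) (at 0)"
    unfolding exp1 by (rule deriv_sum_pow_scaleC)
  have d2: "(\<phi> has_vector_derivative (\<Sum>A\<in>{A. card A = m}. \<Sum>B\<in>Pow A. if card B = 1 then
       ((\<Prod>l\<in>B. u l) * (\<Prod>l\<in>A-B. z l)) *\<^sub>C x A else 0)) (at 0)"
    unfolding exp2 by (intro has_vector_derivative_sum deriv_pow_scaleC)
  have eq: "(\<Sum>S\<in>Pow {..<m}. if card S = 1 then N S else 0) = (\<Sum>A\<in>{A. card A = m}. \<Sum>B\<in>Pow A. if card B = 1 then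
       ((\<Prod>l\<in>B. u l) * (\<Prod>l\<in>A-B. z l)) *\<^sub>C x A else 0)"
    using vector_derivative_unique_at[OF d1 d2] .
  have singles: "(\<Sum>B\<in>Pow A. if card B = 1 then g B else 0) = (\<Sum>k\<in>A. g {k})" if "finite A"
    for A :: "'b set" and g :: "'b set \<Rightarrow> 'c::comm_monoid_add"
  proof -
    have "(\<Sum>B\<in>Pow A. if card B = 1 then g B else 0) = (\<Sum>B\<in>{B\<in>Pow A. card B = 1}. g B)"
      using that by (subst sum.inter_filter[symmetric]) auto
    also have "{B\<in>Pow A. card B = 1} = (\<lambda>k. {k}) ` A"
      by (auto simp: card_Suc_eq)
    also have "(\<Sum>B\<in>(\<lambda>k. {k}) ` A. g B) = (\<Sum>k\<in>A. g {k})"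
      by (subst sum.reindex) (auto simp: inj_on_def)
    finally show ?thesis .
  qed
  have lhs: "(\<Sum>S\<in>Pow {..<m}. if card S = 1 then N S else 0) = of_nat m *\<^sub>C M ((\<lambda>_. z)(0 := u))"
  proof -
    have "(\<Sum>S\<in>Pow {..<m}. if card S = 1 then N S else 0) = (\<Sum>k<m. N {k})"
      by (rule singles) simp
    also have "\<dots> = (\<Sum>k<m. M ((\<lambda>_. z)(0 := u)))"
    proof (rule sum.cong[OF refl])
      fix k assume k: "k \<in> {..<m}"
      have perm: "Transposition.transpose 0 k permutes {..<m}"
        using k m1 by (intro permutes_swap_id) auto
      have "(\<lambda>i. if i \<in> {k} then u else z) = ((\<lambda>_. z)(0 := u)) \<circ> Transposition.transpose 0 k"
        by (auto simp: fun_eq_iff transpose_eq_iff)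
      then show "N {k} = M ((\<lambda>_. z)(0 := u))"
        using ml_sym[OF ml perm, of "(\<lambda>_. z)(0 := u)"] by (simp add: N_def)
    qed
    also have "\<dots> = of_nat m *\<^sub>C M ((\<lambda>_. z)(0 := u))"
      by (induction m) (auto simp: scaleC_add_left scaleC_one)
    finally show ?thesis .
  qed
  have rhs: "(\<Sum>A\<in>{A. card A = m}. \<Sum>B\<in>Pow A. if card B = 1 then
       ((\<Prod>l\<in>B. u l) * (\<Prod>l\<in>A-B. z l)) *\<^sub>C x A else 0) = Qf m x u z"
    unfolding Qf_def
    by (intro sum.cong refl, subst singles) (auto simp: scaleC_sum_left)
  show ?thesis using eq lhs rhs by simp
qed

definition Esgn :: "('n::finite \<Rightarrow> complex) set" where
  "Esgn = PiE UNIV (\<lambda>_. {-1, 1})"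

lemma finite_Esgn: "finite Esgn" unfolding Esgn_def by (intro finite_PiE) auto

lemma card_Esgn: "card (Esgn :: ('n::finite \<Rightarrow> complex) set) = 2 ^ CARD('n)"
  unfolding Esgn_def by (subst card_PiE) (auto simp: numeral_2_eq_2)

lemma Esgn_ne: "Esgn \<noteq> {}"
  unfolding Esgn_def by (auto simp: PiE_eq_empty_iff)

lemma sum_Esgn_prod:
  fixes H :: "'n::finite \<Rightarrow> complex \<Rightarrow> complex"
  shows "(\<Sum>e\<in>(Esgn::('n::finite \<Rightarrow> complex) set). \<Prod>j\<in>UNIV. H j (e j)) = (\<Prod>j\<in>UNIV. H j (-1) + H j 1)"
proof -
  have "(\<Prod>j\<in>UNIV. H j (-1) + H j 1) = (\<Prod>j\<in>(UNIV::'n set). \<Sum>t\<in>{-1,1::complex}. H j t)"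
    by (intro prod.cong refl) (simp add: sum.insert)
  also have "\<dots> = (\<Sum>e\<in>Esgn. \<Prod>j\<in>UNIV. H j (e j))"
    unfolding Esgn_def by (rule prod_sum_PiE[where B="\<lambda>_. {-1,1}" and f=H]) auto
  finally show ?thesis by simp
qed

definition beta :: "real \<Rightarrow> real \<Rightarrow> complex \<Rightarrow> complex" where
  "beta c s t = complex_of_real c + \<i> * complex_of_real s * t"

lemma avg_coef:
  fixes A :: "'n::finite set" and k :: 'n
  assumes "k \<in> A"
  shows "(\<Sum>e\<in>(Esgn::('n \<Rightarrow> complex) set). e k * beta c s (e k) * (\<Prod>j\<in>A-{k}. beta c s (e j)))
       = 2 ^ CARD('n) * (\<i> * complex_of_real s * complex_of_real c ^ (card A - 1))"
proof -
  define H where "H j t = (if j = k then t * beta c s t else if j \<in> A then beta c s t else 1)" for j t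
  have "(\<Sum>e\<in>(Esgn::('n \<Rightarrow> complex) set). e k * beta c s (e k) * (\<Prod>j\<in>A-{k}. beta c s (e j)))
     = (\<Sum>e\<in>(Esgn::('n \<Rightarrow> complex) set). \<Prod>j\<in>UNIV. H j (e j))"
  proof (rule sum.cong[OF refl])
    fix e :: "'n \<Rightarrow> complex"
    have "(\<Prod>j\<in>UNIV. H j (e j)) = (\<Prod>j\<in>A. H j (e j))"
      using assms by (intro prod.mono_neutral_right) (auto simp: H_def)
    also have "\<dots> = H k (e k) * (\<Prod>j\<in>A-{k}. H j (e j))"
      using assms by (subst prod.remove[of A k]) auto
    also have "\<dots> = e k * beta c s (e k) * (\<Prod>j\<in>A-{k}. beta c s (e j))"
      by (auto simp: H_def intro!: prod.cong)
    finally show "e k * beta c s (e k) * (\<Prod>j\<in>A-{k}. beta c s (e j)) = (\<Prod>j\<in>UNIV. H j (e j))" by simp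
  qed
  also have "\<dots> = (\<Prod>j\<in>UNIV. H j (-1) + H j 1)" by (rule sum_Esgn_prod)
  also have "\<dots> = (\<Prod>j\<in>UNIV. 2 * (if j = k then \<i> * complex_of_real s else if j \<in> A then complex_of_real c else 1))"
    by (intro prod.cong refl) (auto simp: H_def beta_def algebra_simps)
  also have "\<dots> = 2 ^ CARD('n) * (\<Prod>j\<in>UNIV. (if j = k then \<i> * complex_of_real s else if j \<in> A then complex_of_real c else 1))"
    by (simp add: prod.distrib)
  also have "(\<Prod>j\<in>UNIV. (if j = k then \<i> * complex_of_real s else if j \<in> A then complex_of_real c else 1))
     = (\<Prod>j\<in>A. (if j = k then \<i> * complex_of_real s else complex_of_real c))"
  proof -
    have "(\<Prod>j\<in>UNIV. (if j = k then \<i> * complex_of_real s else if j \<in> A then complex_of_real c else 1))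
      = (\<Prod>j\<in>UNIV. (if j \<in> A then (if j = k then \<i> * complex_of_real s else complex_of_real c) else 1))"
      using assms by (intro prod.cong) auto
    also have "\<dots> = (\<Prod>j\<in>A. (if j \<in> A then (if j = k then \<i> * complex_of_real s else complex_of_real c) else 1))"
      by (rule prod.mono_neutral_right) auto
    also have "\<dots> = (\<Prod>j\<in>A. (if j = k then \<i> * complex_of_real s else complex_of_real c))"
      by (intro prod.cong) auto
    finally show ?thesis .
  qed
  also have "\<dots> = \<i> * complex_of_real s * complex_of_real c ^ (card A - 1)"
    using assms by (subst prod.remove[of A k]) (auto simp: card_Diff_singleton)
  finally show ?thesis .
qed

lemma avg_identity:
  fixes x :: "'n::finite set \<Rightarrow> 'a::complex_banach"
  shows "(\<Sum>e\<in>Esgn. Qf m x (\<lambda>i. lam i * e i * (beta c s (e i) * w i)) (\<lambda>i. beta c s (e i) * w i))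
    = (2 ^ CARD('n) * (\<i> * complex_of_real s * complex_of_real c ^ (m - 1))) *\<^sub>C Qf m x (\<lambda>i. lam i * w i) w"
proof -
  have "(\<Sum>e\<in>Esgn. Qf m x (\<lambda>i. lam i * e i * (beta c s (e i) * w i)) (\<lambda>i. beta c s (e i) * w i))
     = (\<Sum>A\<in>{A. card A = m}. (\<Sum>e\<in>Esgn. \<Sum>k\<in>A. lam k * e k * (beta c s (e k) * w k) * (\<Prod>j\<in>A-{k}. beta c s (e j) * w j)) *\<^sub>C x A)"
    unfolding Qf_def by (subst sum.swap) (simp add: scaleC_sum_left)
  also have "\<dots> = (\<Sum>A\<in>{A. card A = m}. ((2 ^ CARD('n) * (\<i> * complex_of_real s * complex_of_real c ^ (m - 1))) *
        (\<Sum>k\<in>A. lam k * w k * (\<Prod>j\<in>A-{k}. w j))) *\<^sub>C x A)"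
  proof (rule sum.cong[OF refl])
    fix A :: "'n set" assume A: "A \<in> {A. card A = m}"
    have "(\<Sum>e\<in>Esgn. \<Sum>k\<in>A. lam k * e k * (beta c s (e k) * w k) * (\<Prod>j\<in>A-{k}. beta c s (e j) * w j))
       = (\<Sum>k\<in>A. \<Sum>e\<in>Esgn. (lam k * w k * (\<Prod>j\<in>A-{k}. w j)) * (e k * beta c s (e k) * (\<Prod>j\<in>A-{k}. beta c s (e j))))"
      by (subst sum.swap) (intro sum.cong refl, simp add: prod.distrib algebra_simps)
    also have "\<dots> = (\<Sum>k\<in>A. (lam k * w k * (\<Prod>j\<in>A-{k}. w j)) * (2 ^ CARD('n) * (\<i> * complex_of_real s * complex_of_real c ^ (m - 1))))"
      using A by (intro sum.cong refl) (simp add: avg_coef flip: sum_distrib_left)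
    finally show "(\<Sum>e\<in>Esgn. \<Sum>k\<in>A. lam k * e k * (beta c s (e k) * w k) * (\<Prod>j\<in>A-{k}. beta c s (e j) * w j)) *\<^sub>C x A =
         ((2 ^ CARD('n) * (\<i> * complex_of_real s * complex_of_real c ^ (m - 1))) *
        (\<Sum>k\<in>A. lam k * w k * (\<Prod>j\<in>A-{k}. w j))) *\<^sub>C x A"
      by (simp add: sum_distrib_left algebra_simps)
  qed
  also have "\<dots> = (2 ^ CARD('n) * (\<i> * complex_of_real s * complex_of_real c ^ (m - 1))) *\<^sub>C Qf m x (\<lambda>i. lam i * w i) w"
    unfolding Qf_def scaleC_sum_right by (simp add: scaleC_scaleC)
  finally show ?thesis .
qed

lemma powr_le_self_01: "0 \<le> t \<Longrightarrow> t \<le> 1 \<Longrightarrow> 1 \<le> p \<Longrightarrow> t powr p \<le> (t::real)"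
proof (cases "t = 0")
  case False
  assume "0 \<le> t" "t \<le> 1" "1 \<le> p"
  then have "t powr p \<le> t powr 1" by (intro powr_mono') auto
  then show ?thesis using False \<open>0 \<le> t\<close> by simp
qed simp

lemma convex_powr0:
  assumes p: "p \<ge> 1"
  shows "convex_on {0::real..} (\<lambda>x. x powr p)"
proof (rule convex_onI)
  show "convex {0::real..}" by (rule convex_real_interval)
  fix t x y :: real assume t: "0 < t" "t < 1" and xy: "x \<in> {0..}" "y \<in> {0..}"
  show "((1 - t) *\<^sub>R x + t *\<^sub>R y) powr p \<le> (1 - t) * x powr p + t * y powr p"
  proof (cases "x = 0 \<or> y = 0")
    case True
    then show ?thesis
    proof
      assume x0: "x = 0"
      have "(t * y) powr p = t powr p * y powr p" using t xy by (simp add: powr_mult)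
      also have "\<dots> \<le> t * y powr p" using t p by (intro mult_right_mono powr_le_self_01) auto
      finally show ?thesis using x0 by simp
    next
      assume y0: "y = 0"
      have "((1 - t) * x) powr p = (1 - t) powr p * x powr p" using t xy by (simp add: powr_mult)
      also have "\<dots> \<le> (1 - t) * x powr p" using t p by (intro mult_right_mono powr_le_self_01) auto
      finally show ?thesis using y0 by simp
    qed
  next
    case False
    then have "x \<in> {0<..}" "y \<in> {0<..}" using xy by auto
    then show ?thesis using convex_onD[OF powr_convex[OF p], of t x y] t by simp
  qed
qed

lemma jensen_avg:
  fixes a :: "'b \<Rightarrow> real"
  assumes "finite E" "E \<noteq> {}" "p \<ge> 1" "\<And>e. e \<in> E \<Longrightarrow> a e \<ge> 0"
  shows "((\<Sum>e\<in>E. a e) / card E) powr p \<le> (\<Sum>e\<in>E. a e powr p) / card E"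
proof -
  have cE: "card E > 0" using assms by (simp add: card_gt_0_iff)
  have "(\<Sum>e\<in>E. (1 / card E) *\<^sub>R a e) powr p \<le> (\<Sum>e\<in>E. (1 / card E) * a e powr p)"
    using assms cE by (intro convex_on_sum[OF _ _ convex_powr0]) auto
  then show ?thesis by (simp add: sum_divide_distrib)
qed

lemma pointwise_main:
  fixes x :: "'n::finite set \<Rightarrow> 'a::complex_banach"
  assumes p: "p \<ge> 1" and s: "s \<ge> 0" and c: "c \<ge> 0"
  shows "(s * c ^ (m - 1) * norm (Qf m x (\<lambda>i. lam i * w i) w)) powr p \<le>
    (\<Sum>e\<in>Esgn. norm (Qf m x (\<lambda>i. lam i * e i * (beta c s (e i) * w i)) (\<lambda>i. beta c s (e i) * w i)) powr p) / 2 ^ CARD('n)"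
proof -
  let ?Q = "\<lambda>e. Qf m x (\<lambda>i. lam i * e i * (beta c s (e i) * w i)) (\<lambda>i. beta c s (e i) * w i)"
  have "2 ^ CARD('n) * (s * c ^ (m - 1) * norm (Qf m x (\<lambda>i. lam i * w i) w))
     = norm ((2 ^ CARD('n) * (\<i> * complex_of_real s * complex_of_real c ^ (m - 1))) *\<^sub>C Qf m x (\<lambda>i. lam i * w i) w)"
    using s c by (simp add: norm_scaleC norm_mult norm_power)
  also have "\<dots> = norm (\<Sum>e\<in>Esgn. ?Q e)" by (simp add: avg_identity)
  also have "\<dots> \<le> (\<Sum>e\<in>Esgn. norm (?Q e))" by (rule norm_sum)
  finally have "s * c ^ (m - 1) * norm (Qf m x (\<lambda>i. lam i * w i) w) \<le> (\<Sum>e\<in>Esgn. norm (?Q e)) / card (Esgn::('n\<Rightarrow>complex) set)"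
    by (simp add: card_Esgn field_simps)
  then have "(s * c ^ (m - 1) * norm (Qf m x (\<lambda>i. lam i * w i) w)) powr p \<le> ((\<Sum>e\<in>Esgn. norm (?Q e)) / card (Esgn::('n\<Rightarrow>complex) set)) powr p"
    using s c p by (intro powr_mono2) auto
  also have "\<dots> \<le> (\<Sum>e\<in>Esgn. norm (?Q e) powr p) / card (Esgn::('n\<Rightarrow>complex) set)"
    using p by (intro jensen_avg finite_Esgn Esgn_ne) auto
  finally show ?thesis by (simp add: card_Esgn)
qed

lemma borel_measurable_cis[measurable]: "cis \<in> borel_measurable borel"
  by (intro borel_measurable_continuous_onI continuous_intros)

lemma periodic_shift:
  fixes h :: "real \<Rightarrow> ennreal"
  assumes h[measurable]: "h \<in> borel_measurable borel" and per: "\<And>x. h (x + 2 * pi) = h x"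
    and a: "0 \<le> a" "a \<le> 2 * pi"
  shows "(\<integral>\<^sup>+ t. indicator {0..2*pi} t * h (a + t) \<partial>lborel) = (\<integral>\<^sup>+ t. indicator {0..2*pi} t * h t \<partial>lborel)"
proof -
  have "(\<integral>\<^sup>+ t. indicator {0..2*pi} t * h (a + t) \<partial>lborel) = (\<integral>\<^sup>+ t. indicator {a..a+2*pi} t * h t \<partial>lborel)"
    using nn_integral_real_affine[where f="\<lambda>t. indicator {a..a+2*pi} t * h t" and c=1 and t=a]
    by (simp add: indicator_def)
  also have "\<dots> = (\<integral>\<^sup>+ t. indicator {a<..2*pi} t * h t + indicator {2*pi<..a+2*pi} t * h t \<partial>lborel)"
  proof (rule nn_integral_cong_AE)
    show "AE t in lborel. indicator {a..a+2*pi} t * h t = indicator {a<..2*pi} t * h t + indicator {2*pi<..a+2*pi} t * h t"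
      using AE_lborel_singleton[of a] by eventually_elim (use a in \<open>auto simp: indicator_def\<close>)
  qed
  also have "\<dots> = (\<integral>\<^sup>+ t. indicator {a<..2*pi} t * h t \<partial>lborel) + (\<integral>\<^sup>+ t. indicator {2*pi<..a+2*pi} t * h t \<partial>lborel)"
    by (rule nn_integral_add) auto
  also have "(\<integral>\<^sup>+ t. indicator {2*pi<..a+2*pi} t * h t \<partial>lborel) = (\<integral>\<^sup>+ t. indicator {0<..a} t * h t \<partial>lborel)"
  proof -
    have "(\<integral>\<^sup>+ t. indicator {2*pi<..a+2*pi} t * h t \<partial>lborel) = (\<integral>\<^sup>+ t. indicator {2*pi<..a+2*pi} (2*pi + t) * h (2*pi + t) \<partial>lborel)"
      using nn_integral_real_affine[where f="\<lambda>t. indicator {2*pi<..a+2*pi} t * h t" and c=1 and t="2*pi"] by simp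
    also have "\<dots> = (\<integral>\<^sup>+ t. indicator {0<..a} t * h t \<partial>lborel)"
      using per by (intro nn_integral_cong) (auto simp: indicator_def add.commute)
    finally show ?thesis .
  qed
  also have "(\<integral>\<^sup>+ t. indicator {a<..2*pi} t * h t \<partial>lborel) + (\<integral>\<^sup>+ t. indicator {0<..a} t * h t \<partial>lborel)
      = (\<integral>\<^sup>+ t. indicator {a<..2*pi} t * h t + indicator {0<..a} t * h t \<partial>lborel)"
    by (rule nn_integral_add[symmetric]) auto
  also have "\<dots> = (\<integral>\<^sup>+ t. indicator {0..2*pi} t * h t \<partial>lborel)"
  proof (rule nn_integral_cong_AE)
    show "AE t in lborel. indicator {a<..2*pi} t * h t + indicator {0<..a} t * h t = indicator {0..2*pi} t * h t"
      using AE_lborel_singleton[of 0] by eventually_elim (use a in \<open>auto simp: indicator_def\<close>)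
  qed
  finally show ?thesis .
qed

lemma space_steinhaus[simp]: "space steinhaus = UNIV"
  by (simp add: steinhaus_def)
lemma sets_steinhaus[simp, measurable_cong]: "sets steinhaus = sets borel"
  by (simp add: steinhaus_def)

lemma nn_integral_steinhaus:
  assumes [measurable]: "f \<in> borel_measurable borel"
  shows "(\<integral>\<^sup>+ z. f z \<partial>steinhaus) = (\<integral>\<^sup>+ t. f (cis t) * indicator {0..2*pi} t \<partial>lborel) / emeasure lborel {0..2*pi}"
  unfolding steinhaus_def
  by (subst nn_integral_distr) (auto simp: nn_integral_uniform_measure)

lemma steinhaus_rot_cis:
  assumes a: "0 \<le> a" "a \<le> 2 * pi"
  shows "distr steinhaus borel (\<lambda>z. cis a * z) = steinhaus"
proof (rule measure_eqI)
  show "sets (distr steinhaus borel (\<lambda>z. cis a * z)) = sets steinhaus" by simp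
  fix A assume A: "A \<in> sets (distr steinhaus borel (\<lambda>z. cis a * z))"
  then have [measurable]: "A \<in> sets borel" by simp
  have "emeasure (distr steinhaus borel (\<lambda>z. cis a * z)) A = (\<integral>\<^sup>+ z. indicator A z \<partial>distr steinhaus borel (\<lambda>z. cis a * z))"
    by simp
  also have "\<dots> = (\<integral>\<^sup>+ z. indicator A (cis a * z) \<partial>steinhaus)"
    by (subst nn_integral_distr) auto
  also have "\<dots> = (\<integral>\<^sup>+ t. indicator A (cis (a + t)) * indicator {0..2*pi} t \<partial>lborel) / emeasure lborel {0..2*pi}"
    by (subst nn_integral_steinhaus) (auto simp: cis_mult)
  also have "(\<integral>\<^sup>+ t. indicator A (cis (a + t)) * indicator {0..2*pi} t \<partial>lborel) = (\<integral>\<^sup>+ t. indicator A (cis t) * indicator {0..2*pi} t \<partial>lborel)"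
  proof -
    have cper: "cis (x + 2 * pi) = cis x" for x by (simp add: complex_eq_iff)
    have "(\<integral>\<^sup>+ t. indicator {0..2*pi} t * indicator A (cis (a + t)) \<partial>lborel) = (\<integral>\<^sup>+ t. indicator {0..2*pi} t * indicator A (cis t) \<partial>lborel)"
      by (rule periodic_shift[of "\<lambda>t. indicator A (cis t)" a, OF _ _ a]) (auto simp: cper)
    then show ?thesis by (simp add: mult.commute)
  qed
  also have "\<dots> / emeasure lborel {0..2*pi} = (\<integral>\<^sup>+ z. indicator A z \<partial>steinhaus)"
    by (subst nn_integral_steinhaus) auto
  also have "\<dots> = emeasure steinhaus A" by simp
  finally show "emeasure (distr steinhaus borel (\<lambda>z. cis a * z)) A = emeasure steinhaus A" .
qed

lemma steinhaus_rot:
  assumes "cmod b = 1"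
  shows "distr steinhaus borel (\<lambda>z. b * z) = steinhaus"
proof -
  have b0: "b \<noteq> 0" using assms by auto
  have bc: "b = cis (Arg b)" using assms cis_Arg[OF b0] by (simp add: sgn_div_norm)
  have "- pi < Arg b" "Arg b \<le> pi" using Arg_bounded[of b] by auto
  show ?thesis
  proof (cases "Arg b \<ge> 0")
    case True
    then show ?thesis using bc steinhaus_rot_cis[of "Arg b"] \<open>Arg b \<le> pi\<close> by simp
  next
    case False
    have "cis (Arg b + 2 * pi) = cis (Arg b)" by (simp add: complex_eq_iff)
    then have "b = cis (Arg b + 2 * pi)" using bc by metis
    then show ?thesis using steinhaus_rot_cis[of "Arg b + 2 * pi"] False \<open>- pi < Arg b\<close> by simp
  qed
qed

lemma prob_space_steinhaus: "prob_space steinhaus"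
  unfolding steinhaus_def
  by (intro prob_space.prob_space_distr prob_space_uniform_measure) auto

lemma prob_space_rademacher: "prob_space rademacher"
  unfolding rademacher_def by (rule measure_pmf.prob_space_axioms)

lemma sets_rademacher[simp]: "sets rademacher = UNIV"
  unfolding rademacher_def by simp
lemma space_rademacher[simp]: "space rademacher = UNIV"
  unfolding rademacher_def by simp

lemma PiM_rot:
  assumes b: "\<And>i. cmod (b i) = 1"
  shows "distr (PiM UNIV (\<lambda>_::'n::finite. steinhaus)) (PiM UNIV (\<lambda>_. steinhaus)) (\<lambda>w i. b i * w i)
       = PiM UNIV (\<lambda>_. steinhaus)"
proof -
  interpret P: product_prob_space "\<lambda>_::'n. steinhaus"
    by (intro product_prob_spaceI prob_space_steinhaus)
  have meas: "(\<lambda>w i. b i * w i) \<in> PiM UNIV (\<lambda>_::'n. steinhaus) \<rightarrow>\<^sub>M PiM UNIV (\<lambda>_. steinhaus)"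
    by (rule measurable_PiM_single') (auto simp: space_PiM)
  show ?thesis
  proof (rule P.PiM_eqI)
    show "finite (UNIV :: 'n set)" by simp
    show "sets (distr (PiM UNIV (\<lambda>_::'n. steinhaus)) (PiM UNIV (\<lambda>_. steinhaus)) (\<lambda>w i. b i * w i)) = sets (PiM UNIV (\<lambda>_. steinhaus))"
      by simp
    fix A :: "'n \<Rightarrow> complex set" assume A: "\<And>i. i \<in> UNIV \<Longrightarrow> A i \<in> sets steinhaus"
    have pre: "(\<lambda>z. b i * z) -` A i \<in> sets borel" for i
    proof (rule measurable_sets_borel)
      show "(\<lambda>z. b i * z) \<in> borel_measurable borel" by measurable
      show "A i \<in> sets borel" using A by simp
    qed
    have "emeasure (distr (PiM UNIV (\<lambda>_::'n. steinhaus)) (PiM UNIV (\<lambda>_. steinhaus)) (\<lambda>w i. b i * w i)) (PiE UNIV A)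
      = emeasure (PiM UNIV (\<lambda>_::'n. steinhaus)) ((\<lambda>w i. b i * w i) -` PiE UNIV A \<inter> space (PiM UNIV (\<lambda>_::'n. steinhaus)))"
      using A by (intro emeasure_distr meas sets_PiM_I_finite) auto
    also have "(\<lambda>w i. b i * w i) -` PiE UNIV A \<inter> space (PiM UNIV (\<lambda>_::'n. steinhaus)) = PiE UNIV (\<lambda>i. (\<lambda>z. b i * z) -` A i \<inter> space steinhaus)"
      by (auto simp: space_PiM PiE_def Pi_def extensional_def)
    also have "emeasure (PiM UNIV (\<lambda>_::'n. steinhaus)) \<dots> = (\<Prod>i\<in>UNIV. emeasure steinhaus ((\<lambda>z. b i * z) -` A i \<inter> space steinhaus))"
      using pre by (intro P.emeasure_PiM) auto
    also have "\<dots> = (\<Prod>i\<in>UNIV. emeasure (distr steinhaus borel (\<lambda>z. b i * z)) (A i))"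
    proof (intro prod.cong refl emeasure_distr[symmetric])
      fix i
      have "(\<lambda>z. b i * z) \<in> borel_measurable borel" by measurable
      then show "(\<lambda>z. b i * z) \<in> steinhaus \<rightarrow>\<^sub>M borel" by simp
      show "A i \<in> sets borel" using A by simp
    qed
    also have "\<dots> = (\<Prod>i\<in>UNIV. emeasure steinhaus (A i))"
      using b by (simp add: steinhaus_rot)
    finally show "emeasure (distr (PiM UNIV (\<lambda>_::'n. steinhaus)) (PiM UNIV (\<lambda>_. steinhaus)) (\<lambda>w i. b i * w i)) (PiE UNIV A) = (\<Prod>i\<in>UNIV. emeasure steinhaus (A i))" .
  qed
qed

lemma AE_steinhaus_unimod: "AE z in steinhaus. cmod z = 1"
  unfolding steinhaus_def by (subst AE_distr_iff) auto

lemma AE_S_unimod: "AE w in PiM UNIV (\<lambda>_::'n::finite. steinhaus). \<forall>i. cmod (w i) = 1"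
proof -
  have "\<forall>i. AE w in PiM UNIV (\<lambda>_::'n::finite. steinhaus). cmod (w i) = 1"
    using AE_PiM_component[where I=UNIV and M="\<lambda>_. steinhaus", OF prob_space_steinhaus _ AE_steinhaus_unimod] by auto
  then have "AE w in PiM UNIV (\<lambda>_::'n::finite. steinhaus). \<forall>i\<in>UNIV. cmod (w i) = 1"
    by (intro AE_finite_allI) auto
  then show ?thesis by simp
qed

lemma Esgn_iff: "e \<in> Esgn \<longleftrightarrow> (\<forall>i. e i \<in> {-1, 1})"
  unfolding Esgn_def by (simp add: PiE_UNIV_domain Pi_iff)

lemma AE_R_Esgn: "AE e in PiM UNIV (\<lambda>_::'n::finite. rademacher). e \<in> Esgn"
proof -
  have 1: "AE z in rademacher. z \<in> {-1, 1}"
    unfolding rademacher_def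
  proof (rule AE_pmfI)
    fix y assume "y \<in> set_pmf (pmf_of_set {-1, 1::complex})"
    then show "y \<in> {-1, 1}" by (subst (asm) set_pmf_of_set) auto
  qed
  have 2: "AE e in PiM UNIV (\<lambda>_::'n::finite. rademacher). e i \<in> {-1,1}" for i
    by (rule AE_PiM_component[where I=UNIV and M="\<lambda>_. rademacher", OF prob_space_rademacher _ 1]) simp_all
  have "AE e in PiM UNIV (\<lambda>_::'n::finite. rademacher). \<forall>i\<in>UNIV. e i \<in> {-1,1}"
    by (rule AE_finite_allI) (simp, rule 2)
  then show ?thesis by (simp add: Esgn_iff)
qed

lemma emeasure_R_single:
  assumes "e \<in> (Esgn :: ('n::finite \<Rightarrow> complex) set)"
  shows "emeasure (PiM UNIV (\<lambda>_::'n. rademacher)) {e} = ennreal (1 / 2 ^ CARD('n))"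
proof -
  interpret P: product_prob_space "\<lambda>_::'n. rademacher"
    by (intro product_prob_spaceI prob_space_rademacher)
  have "{e} = PiE UNIV (\<lambda>i. {e i})" by (auto simp: PiE_def Pi_def extensional_def)
  then have "emeasure (PiM UNIV (\<lambda>_::'n. rademacher)) {e} = (\<Prod>i\<in>UNIV. emeasure rademacher {e i})"
    by (simp add: P.emeasure_PiM)
  also have "\<dots> = (\<Prod>i\<in>(UNIV::'n set). ennreal (1/2))"
  proof (rule prod.cong[OF refl])
    fix i
    have "e i \<in> {-1, 1}" using assms by (auto simp: Esgn_def)
    then show "emeasure rademacher {e i} = ennreal (1/2)"
      unfolding rademacher_def by (subst emeasure_pmf_single) (auto simp: pmf_of_set)
  qed
  also have "\<dots> = ennreal ((1/2) ^ CARD('n))"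
    by (subst prod_constant, subst ennreal_power) auto
  also have "\<dots> = ennreal (1 / 2 ^ CARD('n))"
    by (simp add: power_one_over)
  finally show ?thesis .
qed

lemma nn_integral_R:
  "(\<integral>\<^sup>+ e. f e \<partial>PiM UNIV (\<lambda>_::'n::finite. rademacher)) = (\<Sum>e\<in>Esgn. f e) * ennreal (1 / 2 ^ CARD('n))"
proof -
  have "(\<integral>\<^sup>+ e. f e \<partial>PiM UNIV (\<lambda>_::'n::finite. rademacher)) = (\<integral>\<^sup>+ e. f e * indicator Esgn e \<partial>PiM UNIV (\<lambda>_::'n::finite. rademacher))"
    using AE_R_Esgn by (intro nn_integral_cong_AE) (auto elim!: eventually_mono)
  also have "\<dots> = (\<Sum>e\<in>Esgn. f e * emeasure (PiM UNIV (\<lambda>_::'n. rademacher)) {e})"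
  proof (rule nn_integral_indicator_finite[OF finite_Esgn])
    fix a :: "'n \<Rightarrow> complex"
    have "{a} = PiE UNIV (\<lambda>i. {a i})" by (auto simp: PiE_def Pi_def extensional_def)
    also have "\<dots> \<in> sets (PiM UNIV (\<lambda>_::'n. rademacher))" by (intro sets_PiM_I_finite) auto
    finally show "{a} \<in> sets (PiM UNIV (\<lambda>_::'n. rademacher))" .
  qed
  also have "\<dots> = (\<Sum>e\<in>Esgn. f e) * ennreal (1 / 2 ^ CARD('n))"
    by (simp add: emeasure_R_single sum_distrib_right)
  finally show ?thesis .
qed

lemma rademacher_meas_borel[measurable]: "(\<lambda>z::complex. z) \<in> rademacher \<rightarrow>\<^sub>M borel"
  by (simp add: measurable_def)

lemma steinhaus_meas_borel[measurable]: "(\<lambda>z::complex. z) \<in> steinhaus \<rightarrow>\<^sub>M borel"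
  by (simp add: measurable_def)

lemma continuous_on_scaleC[continuous_intros]:
  fixes v :: "'a::complex_banach"
  assumes "continuous_on S f"
  shows "continuous_on S (\<lambda>y. f y *\<^sub>C v)"
  using bounded_linear.continuous_on[OF bounded_linear_scaleC_left assms] .

lemma continuous_on_fst_coord[continuous_intros]:
  "continuous_on S (\<lambda>p::('n \<Rightarrow> complex) \<times> ('n \<Rightarrow> complex). fst p k)"
  by (rule continuous_on_subset[OF continuous_on_compose2[OF continuous_on_product_coordinates continuous_on_fst[OF continuous_on_id]]]) auto

lemma continuous_on_snd_coord[continuous_intros]:
  "continuous_on S (\<lambda>p::('n \<Rightarrow> complex) \<times> ('n \<Rightarrow> complex). snd p k)"
  by (rule continuous_on_subset[OF continuous_on_compose2[OF continuous_on_product_coordinates continuous_on_snd[OF continuous_on_id]]]) auto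

lemma Qf_cont:
  fixes x :: "'n::finite set \<Rightarrow> 'a::complex_banach"
  shows "continuous_on UNIV (\<lambda>p::('n \<Rightarrow> complex) \<times> ('n \<Rightarrow> complex). Qf m x (fst p) (snd p))"
  unfolding Qf_def by (intro continuous_intros)

lemma Qf_measurable:
  fixes x :: "'n::finite set \<Rightarrow> 'a::complex_banach"
  assumes "\<And>i. (\<lambda>y. u y i) \<in> borel_measurable N" "\<And>i. (\<lambda>y. z y i) \<in> borel_measurable N"
  shows "(\<lambda>y. Qf m x (u y) (z y)) \<in> borel_measurable N"
proof -
  have u: "u \<in> borel_measurable N" by (rule measurable_coordinatewise_then_product) (rule assms)
  have z: "z \<in> borel_measurable N" by (rule measurable_coordinatewise_then_product) (rule assms)
  have "(\<lambda>y. (u y, z y)) \<in> borel_measurable N" using u z by (rule borel_measurable_Pair)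
  moreover have "(\<lambda>p::('n \<Rightarrow> complex) \<times> ('n \<Rightarrow> complex). Qf m x (fst p) (snd p)) \<in> borel_measurable borel"
    by (rule borel_measurable_continuous_onI[OF Qf_cont])
  ultimately have "(\<lambda>y. (\<lambda>p::('n \<Rightarrow> complex) \<times> ('n \<Rightarrow> complex). Qf m x (fst p) (snd p)) (u y, z y)) \<in> borel_measurable N"
    by (rule measurable_compose)
  then show ?thesis by simp
qed

lemma meas_comp_S: "(\<lambda>w. w i) \<in> borel_measurable (PiM UNIV (\<lambda>_::'n::finite. steinhaus))"
  by measurable

lemma meas_comp_RS1: "(\<lambda>ew. fst ew i) \<in> borel_measurable (PiM UNIV (\<lambda>_::'n::finite. rademacher) \<Otimes>\<^sub>M PiM UNIV (\<lambda>_::'n::finite. steinhaus))"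
  by measurable

lemma meas_comp_RS2: "(\<lambda>ew. snd ew i) \<in> borel_measurable (PiM UNIV (\<lambda>_::'n::finite. rademacher) \<Otimes>\<^sub>M PiM UNIV (\<lambda>_::'n::finite. steinhaus))"
  by measurable

lemma Kbound:
  assumes "m \<ge> (1::nat)"
  shows "1 \<le> sqrt (exp 1 * real m) * ((1 / sqrt (real m)) * sqrt ((real m - 1) / real m) ^ (m - 1))"
proof -
  obtain k where mk: "m = Suc k" using assms by (cases m) auto
  have e1: "(1 + 1 / real k) ^ k \<le> exp 1"
  proof (cases "k = 0")
    case True then show ?thesis by simp
  next
    case False
    then show ?thesis by (intro exp_ge_one_plus_x_over_n_power_n) auto
  qed
  have prod1: "(real k / real (Suc k)) ^ k * (1 + 1 / real k) ^ k = 1"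
  proof (cases "k = 0")
    case True then show ?thesis by simp
  next
    case False
    then have hk: "real k > 0" by simp
    have hk2: "real k + real k * real k \<noteq> 0" using hk by (smt (verit, best) mult_pos_pos)
    have "real k / real (Suc k) * (1 + 1 / real k) = 1" using hk hk2 by (simp add: field_simps)
    then show ?thesis by (metis power_mult_distrib power_one)
  qed
  have pos: "(1 + 1 / real k) ^ k > 0" by (intro zero_less_power) (simp add: add_pos_nonneg)
  have q: "exp 1 * (real k / real (Suc k)) ^ k \<ge> 1"
  proof -
    have "(real k / real (Suc k)) ^ k = ((real k / real (Suc k)) ^ k * (1 + 1 / real k) ^ k) / (1 + 1 / real k) ^ k"
      by (rule nonzero_mult_div_cancel_right[symmetric]) (use pos in linarith)
    then have "(real k / real (Suc k)) ^ k = 1 / (1 + 1 / real k) ^ k"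
      unfolding prod1 .
    then show ?thesis using e1 pos by (simp add: field_simps)
  qed
  have "sqrt (exp 1 * real m) * ((1 / sqrt (real m)) * sqrt ((real m - 1) / real m) ^ (m - 1))
      = sqrt (exp 1 * (real k / real (Suc k)) ^ k)"
  proof -
    have a: "sqrt (exp 1 * real m) * (1 / sqrt (real m)) = sqrt (exp 1)"
      using mk by (simp add: real_sqrt_mult)
    have b: "sqrt ((real m - 1) / real m) ^ (m - 1) = sqrt ((real k / real (Suc k)) ^ k)"
      using mk by (simp add: real_sqrt_power)
    have "sqrt (exp 1 * real m) * ((1 / sqrt (real m)) * sqrt ((real m - 1) / real m) ^ (m - 1))
        = (sqrt (exp 1 * real m) * (1 / sqrt (real m))) * sqrt ((real m - 1) / real m) ^ (m - 1)"
      by (simp only: mult.assoc)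
    also have "\<dots> = sqrt (exp 1) * sqrt ((real k / real (Suc k)) ^ k)" by (simp only: a b)
    also have "\<dots> = sqrt (exp 1 * (real k / real (Suc k)) ^ k)" by (simp add: real_sqrt_mult)
    finally show ?thesis .
  qed
  also have "\<dots> \<ge> 1" using q by simp
  finally show ?thesis by simp
qed

lemma final_ineq:
  fixes K L Rr C p :: real
  assumes K: "K > 0" and L: "L \<ge> 0" and p: "p \<ge> 1" and KL: "K powr p * L \<le> Rr" and CK: "1 \<le> C * K"
  shows "L powr (1/p) \<le> C * Rr powr (1/p)"
proof -
  have "(K powr p * L) powr (1/p) = K * L powr (1/p)"
    using K L p by (simp add: powr_mult powr_powr)
  moreover have "(K powr p * L) powr (1/p) \<le> Rr powr (1/p)"
    using K L p KL by (intro powr_mono2) auto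
  ultimately have 1: "K * L powr (1/p) \<le> Rr powr (1/p)" by simp
  have C0: "C \<ge> 0" using CK K by (smt (verit) mult_nonpos_nonneg)
  have "L powr (1/p) \<le> (C * K) * L powr (1/p)"
    using CK by (simp add: mult_le_cancel_right1)
  also have "\<dots> = C * (K * L powr (1/p))" by simp
  also have "\<dots> \<le> C * Rr powr (1/p)" using 1 C0 by (intro mult_left_mono) auto
  finally show ?thesis .
qed

lemma norm_Qf_bound:
  fixes x :: "'n::finite set \<Rightarrow> 'a::complex_banach"
  assumes z: "\<And>i. cmod (z i) = 1"
  shows "norm (Qf m x u z) \<le> (\<Sum>A\<in>{A. card A = m}. (\<Sum>k\<in>A. cmod (u k)) * norm (x A))"
proof -
  have "norm (Qf m x u z) \<le> (\<Sum>A\<in>{A. card A = m}. norm ((\<Sum>k\<in>A. u k * (\<Prod>j\<in>A-{k}. z j)) *\<^sub>C x A))"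
    unfolding Qf_def by (rule norm_sum)
  also have "\<dots> \<le> (\<Sum>A\<in>{A. card A = m}. (\<Sum>k\<in>A. cmod (u k)) * norm (x A))"
  proof (rule sum_mono)
    fix A :: "'n set"
    have "cmod (\<Sum>k\<in>A. u k * (\<Prod>j\<in>A-{k}. z j)) \<le> (\<Sum>k\<in>A. cmod (u k * (\<Prod>j\<in>A-{k}. z j)))"
      by (rule norm_sum)
    also have "\<dots> = (\<Sum>k\<in>A. cmod (u k))"
      using z by (simp add: norm_mult prod_norm[symmetric])
    finally show "norm ((\<Sum>k\<in>A. u k * (\<Prod>j\<in>A-{k}. z j)) *\<^sub>C x A) \<le> (\<Sum>k\<in>A. cmod (u k)) * norm (x A)"
      by (simp add: norm_scaleC mult_right_mono)
  qed
  finally show ?thesis .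
qed

theorem lemma4p4:
  fixes x :: "'n::finite set \<Rightarrow> 'a::complex_banach"
    and M :: "(nat \<Rightarrow> ('n \<Rightarrow> complex)) \<Rightarrow> 'a"
    and lam :: "'n \<Rightarrow> complex"
    and m :: nat and p :: real
  assumes "m \<ge> 1"
    and "sym_multilinear m M"
    and "\<forall>z. M (\<lambda>_. z) = tetra_poly m x z"
    and "1 \<le> p"
  shows "(\<integral>w. norm (M ((\<lambda>_. w)(0 := (\<lambda>i. lam i * w i)))) powr p
            \<partial>(PiM UNIV (\<lambda>_::'n. steinhaus))) powr (1 / p)
         \<le> sqrt (exp 1 * real m) *
           (\<integral>ew. norm (M ((\<lambda>_. snd ew)(0 := (\<lambda>i. lam i * fst ew i * snd ew i)))) powr p
            \<partial>(PiM UNIV (\<lambda>_::'n. rademacher) \<Otimes>\<^sub>M PiM UNIV (\<lambda>_::'n. steinhaus))) powr (1 / p)"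
proof -
  note m1 = assms(1) and ml = assms(2) and P = assms(3) and p = assms(4)
  define S where "S = PiM UNIV (\<lambda>_::'n. steinhaus)"
  define R where "R = PiM UNIV (\<lambda>_::'n. rademacher)"
  define s where "s = 1 / sqrt (real m)"
  define c where "c = sqrt ((real m - 1) / real m)"
  define K where "K = s * c ^ (m - 1)"
  define rot where "rot e w = (\<lambda>i. beta c s (e i) * w i)" for e w :: "'n \<Rightarrow> complex"
  define q0 where "q0 w = norm (Qf m x (\<lambda>i. lam i * w i) w) / real m" for w
  define q where "q e w = norm (Qf m x (\<lambda>i. lam i * e i * w i) w) / real m" for e w
  have m0: "real m > 0" using m1 by simp
  have s0: "s > 0" using m0 by (simp add: s_def)
  have c0: "c \<ge> 0" using m1 by (simp add: c_def)
  have K0: "K > 0"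
  proof (cases "m = 1")
    case True then show ?thesis using s0 by (simp add: K_def)
  next
    case False
    then have "c > 0" using m1 by (simp add: c_def)
    then show ?thesis using s0 by (simp add: K_def)
  qed
  have cs: "c^2 + s^2 = 1"
    using m1 m0 by (simp add: c_def s_def power_divide field_simps)
  have unimod: "cmod (beta c s t) = 1" if "t \<in> {-1, 1}" for t
  proof -
    have "cmod (beta c s t) = sqrt (c^2 + s^2)"
      using that by (auto simp: beta_def cmod_def)
    then show ?thesis using cs by simp
  qed
  interpret S: prob_space S unfolding S_def by (intro prob_space_PiM prob_space_steinhaus)
  interpret R: prob_space R unfolding R_def by (intro prob_space_PiM prob_space_rademacher)

  have L1': "norm (M ((\<lambda>_. z)(0 := u))) = norm (Qf m x u z) / real m" for u z
  proof -
    have eqQ: "of_nat m *\<^sub>C M ((\<lambda>_. z)(0 := u)) = Qf m x u z" by (rule L1[OF ml m1 P])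
    have "norm (Qf m x u z) = norm (of_nat m *\<^sub>C M ((\<lambda>_. z)(0 := u)))"
      by (simp only: eqQ)
    also have "\<dots> = real m * norm (M ((\<lambda>_. z)(0 := u)))" by (simp add: norm_scaleC)
    finally show ?thesis using m0 by (simp add: field_simps)
  qed
  have lhs_eq: "(\<integral>w. norm (M ((\<lambda>_. w)(0 := (\<lambda>i. lam i * w i)))) powr p \<partial>(PiM UNIV (\<lambda>_::'n. steinhaus)))
      = (\<integral>w. q0 w powr p \<partial>S)"
    unfolding S_def q0_def L1' by simp
  have rhs_eq: "(\<integral>ew. norm (M ((\<lambda>_. snd ew)(0 := (\<lambda>i. lam i * fst ew i * snd ew i)))) powr p
            \<partial>(PiM UNIV (\<lambda>_::'n. rademacher) \<Otimes>\<^sub>M PiM UNIV (\<lambda>_::'n. steinhaus)))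
      = (\<integral>ew. q (fst ew) (snd ew) powr p \<partial>(R \<Otimes>\<^sub>M S))"
    unfolding S_def R_def q_def L1' by simp

  have mQ0: "(\<lambda>w. Qf m x (\<lambda>i. lam i * w i) w) \<in> borel_measurable S"
    by (rule Qf_measurable) (simp_all add: S_def)
  have mq0[measurable]: "(\<lambda>w. q0 w powr p) \<in> borel_measurable S"
    unfolding q0_def using mQ0 by measurable
  have mQ: "(\<lambda>ew. Qf m x (\<lambda>i. lam i * fst ew i * snd ew i) (snd ew)) \<in> borel_measurable (R \<Otimes>\<^sub>M S)"
    by (rule Qf_measurable) (simp_all add: S_def R_def)
  have mq[measurable]: "(\<lambda>ew. q (fst ew) (snd ew) powr p) \<in> borel_measurable (R \<Otimes>\<^sub>M S)"
    unfolding q_def using mQ by measurable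
  have mQe: "(\<lambda>w. Qf m x (\<lambda>i. lam i * e i * w i) w) \<in> borel_measurable S" for e
    by (rule Qf_measurable) (simp_all add: S_def)
  have mqe[measurable]: "(\<lambda>w. q e w powr p) \<in> borel_measurable S" for e
    unfolding q_def using mQe by measurable
  have rotmeas: "rot e \<in> S \<rightarrow>\<^sub>M S" for e
    unfolding S_def rot_def by (rule measurable_PiM_single') (auto simp: space_PiM)
  have mqrot[measurable]: "(\<lambda>w. q e (rot e w) powr p) \<in> borel_measurable S" for e
    using measurable_compose[OF rotmeas mqe] by simp

  have rotinv: "(\<integral>\<^sup>+ w. ennreal (q e (rot e w) powr p) \<partial>S) = (\<integral>\<^sup>+ w. ennreal (q e w powr p) \<partial>S)"
    if e: "e \<in> Esgn" for e
  proof -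
    have b: "cmod (beta c s (e i)) = 1" for i using e unimod by (auto simp: Esgn_iff)
    have "(\<integral>\<^sup>+ w. ennreal (q e (rot e w) powr p) \<partial>S) = (\<integral>\<^sup>+ w. ennreal (q e w powr p) \<partial>distr S S (rot e))"
      by (subst nn_integral_distr[OF rotmeas]) auto
    also have "distr S S (rot e) = S"
      unfolding S_def rot_def by (rule PiM_rot[OF b])
    finally show ?thesis .
  qed

  have tonelli: "(\<integral>\<^sup>+ ew. ennreal (q (fst ew) (snd ew) powr p) \<partial>(R \<Otimes>\<^sub>M S))
      = (\<Sum>e\<in>Esgn. \<integral>\<^sup>+ w. ennreal (q e w powr p) \<partial>S) * ennreal (1 / 2 ^ CARD('n))"
  proof -
    have "(\<integral>\<^sup>+ ew. ennreal (q (fst ew) (snd ew) powr p) \<partial>(R \<Otimes>\<^sub>M S))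
        = (\<integral>\<^sup>+ e. \<integral>\<^sup>+ w. ennreal (q e w powr p) \<partial>S \<partial>R)"
      by (subst S.nn_integral_fst[symmetric]) auto
    also have "\<dots> = (\<Sum>e\<in>Esgn. \<integral>\<^sup>+ w. ennreal (q e w powr p) \<partial>S) * ennreal (1 / 2 ^ CARD('n))"
      unfolding R_def by (rule nn_integral_R)
    finally show ?thesis .
  qed

  have fin_e: "(\<integral>\<^sup>+ w. ennreal (q e w powr p) \<partial>S) < \<infinity>" for e
  proof -
    define B where "B = (\<Sum>A\<in>{A. card A = m}. (\<Sum>k\<in>A. cmod (lam k * e k)) * norm (x A)) / real m"
    have "AE w in S. ennreal (q e w powr p) \<le> ennreal (B powr p)"
      using AE_S_unimod[where 'n='n] unfolding S_def[symmetric]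
    proof eventually_elim
      case (elim w)
      have "norm (Qf m x (\<lambda>i. lam i * e i * w i) w) \<le> (\<Sum>A\<in>{A. card A = m}. (\<Sum>k\<in>A. cmod (lam k * e k * w k)) * norm (x A))"
        using elim by (intro norm_Qf_bound) auto
      also have "\<dots> = (\<Sum>A\<in>{A. card A = m}. (\<Sum>k\<in>A. cmod (lam k * e k)) * norm (x A))"
        using elim by (simp add: norm_mult)
      finally have "q e w \<le> B" unfolding q_def B_def using m0 by (intro divide_right_mono) auto
      then have "q e w powr p \<le> B powr p" using p by (intro powr_mono2) (auto simp: q_def)
      then show ?case by (rule ennreal_leI)
    qed
    then have "(\<integral>\<^sup>+ w. ennreal (q e w powr p) \<partial>S) \<le> (\<integral>\<^sup>+ w. ennreal (B powr p) \<partial>S)"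
      by (rule nn_integral_mono_AE)
    also have "\<dots> = ennreal (B powr p)" by (simp add: S.emeasure_space_1)
    finally have "(\<integral>\<^sup>+ w. ennreal (q e w powr p) \<partial>S) < top"
      using ennreal_less_top[of "B powr p"] by (rule le_less_trans)
    then show ?thesis by (simp add: infinity_ennreal_def)
  qed
  have fin: "(\<integral>\<^sup>+ ew. ennreal (q (fst ew) (snd ew) powr p) \<partial>(R \<Otimes>\<^sub>M S)) < \<infinity>"
  proof -
    have "(\<Sum>e\<in>Esgn. \<integral>\<^sup>+ w. ennreal (q e w powr p) \<partial>S) < top"
      by (subst ennreal_sum_less_top[OF finite_Esgn]) (use fin_e in \<open>simp add: infinity_ennreal_def\<close>)
    then show ?thesis unfolding tonelli by (simp add: ennreal_mult_less_top infinity_ennreal_def)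
  qed

  have pw: "(K * q0 w) powr p \<le> (\<Sum>e\<in>Esgn. q e (rot e w) powr p) / 2 ^ CARD('n)" for w
  proof -
    have "(K * q0 w) powr p = (K * norm (Qf m x (\<lambda>i. lam i * w i) w)) powr p / real m powr p"
      using K0 m0 by (simp add: q0_def powr_divide)
    also have "\<dots> \<le> ((\<Sum>e\<in>Esgn. norm (Qf m x (\<lambda>i. lam i * e i * (beta c s (e i) * w i)) (\<lambda>i. beta c s (e i) * w i)) powr p) / 2 ^ CARD('n)) / real m powr p"
      using pointwise_main[OF p s0[THEN less_imp_le] c0, of m x lam w] m0
      by (intro divide_right_mono) (auto simp: K_def)
    also have "\<dots> = (\<Sum>e\<in>Esgn. q e (rot e w) powr p) / 2 ^ CARD('n)"
      using m0 by (simp add: q_def rot_def powr_divide sum_divide_distrib mult.commute)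
    finally show ?thesis .
  qed

  have main_nn: "ennreal (K powr p) * (\<integral>\<^sup>+ w. ennreal (q0 w powr p) \<partial>S)
      \<le> (\<integral>\<^sup>+ ew. ennreal (q (fst ew) (snd ew) powr p) \<partial>(R \<Otimes>\<^sub>M S))"
  proof -
    have "ennreal (K powr p) * (\<integral>\<^sup>+ w. ennreal (q0 w powr p) \<partial>S) = (\<integral>\<^sup>+ w. ennreal (K powr p * q0 w powr p) \<partial>S)"
      by (subst nn_integral_cmult[symmetric]) (auto simp: ennreal_mult)
    also have "\<dots> \<le> (\<integral>\<^sup>+ w. ennreal ((\<Sum>e\<in>Esgn. q e (rot e w) powr p) / 2 ^ CARD('n)) \<partial>S)"
    proof (rule nn_integral_mono)
      fix w
      have "K powr p * q0 w powr p = (K * q0 w) powr p"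
        by (rule powr_mult[symmetric])
      then show "ennreal (K powr p * q0 w powr p) \<le> ennreal ((\<Sum>e\<in>Esgn. q e (rot e w) powr p) / 2 ^ CARD('n))"
        using pw[of w] by (intro ennreal_leI) simp
    qed
    also have "\<dots> = (\<integral>\<^sup>+ w. (\<Sum>e\<in>Esgn. ennreal (q e (rot e w) powr p)) * ennreal (1 / 2 ^ CARD('n)) \<partial>S)"
    proof (rule nn_integral_cong)
      fix w
      have nn: "0 \<le> q e (rot e w) powr p" for e by simp
      have "ennreal ((\<Sum>e\<in>Esgn. q e (rot e w) powr p) / 2 ^ CARD('n))
          = ennreal ((\<Sum>e\<in>Esgn. q e (rot e w) powr p) * (1 / 2 ^ CARD('n)))" by simp
      also have "\<dots> = ennreal (\<Sum>e\<in>Esgn. q e (rot e w) powr p) * ennreal (1 / 2 ^ CARD('n))"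
        by (rule ennreal_mult) (simp_all add: sum_nonneg)
      also have "ennreal (\<Sum>e\<in>Esgn. q e (rot e w) powr p) = (\<Sum>e\<in>Esgn. ennreal (q e (rot e w) powr p))"
        by (rule sum_ennreal[symmetric]) simp
      finally show "ennreal ((\<Sum>e\<in>Esgn. q e (rot e w) powr p) / 2 ^ CARD('n))
          = (\<Sum>e\<in>Esgn. ennreal (q e (rot e w) powr p)) * ennreal (1 / 2 ^ CARD('n))" .
    qed
    also have "\<dots> = (\<Sum>e\<in>Esgn. \<integral>\<^sup>+ w. ennreal (q e (rot e w) powr p) \<partial>S) * ennreal (1 / 2 ^ CARD('n))"
    proof -
      have "(\<integral>\<^sup>+ w. (\<Sum>e\<in>Esgn. ennreal (q e (rot e w) powr p)) * ennreal (1 / 2 ^ CARD('n)) \<partial>S)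
        = (\<integral>\<^sup>+ w. (\<Sum>e\<in>Esgn. ennreal (q e (rot e w) powr p)) \<partial>S) * ennreal (1 / 2 ^ CARD('n))"
        by (rule nn_integral_multc) measurable
      also have "(\<integral>\<^sup>+ w. (\<Sum>e\<in>Esgn. ennreal (q e (rot e w) powr p)) \<partial>S) = (\<Sum>e\<in>Esgn. \<integral>\<^sup>+ w. ennreal (q e (rot e w) powr p) \<partial>S)"
        by (rule nn_integral_sum) measurable
      finally show ?thesis .
    qed
    also have "\<dots> = (\<Sum>e\<in>Esgn. \<integral>\<^sup>+ w. ennreal (q e w powr p) \<partial>S) * ennreal (1 / 2 ^ CARD('n))"
      by (simp add: rotinv)
    also have "\<dots> = (\<integral>\<^sup>+ ew. ennreal (q (fst ew) (snd ew) powr p) \<partial>(R \<Otimes>\<^sub>M S))"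
      by (rule tonelli[symmetric])
    finally show ?thesis .
  qed

  have LL: "(\<integral>w. q0 w powr p \<partial>S) = enn2real (\<integral>\<^sup>+ w. ennreal (q0 w powr p) \<partial>S)"
    by (rule integral_eq_nn_integral) auto
  have RR: "(\<integral>ew. q (fst ew) (snd ew) powr p \<partial>(R \<Otimes>\<^sub>M S)) = enn2real (\<integral>\<^sup>+ ew. ennreal (q (fst ew) (snd ew) powr p) \<partial>(R \<Otimes>\<^sub>M S))"
    by (rule integral_eq_nn_integral) auto
  have KLR: "K powr p * (\<integral>w. q0 w powr p \<partial>S) \<le> (\<integral>ew. q (fst ew) (snd ew) powr p \<partial>(R \<Otimes>\<^sub>M S))"
  proof -
    have "K powr p * enn2real (\<integral>\<^sup>+ w. ennreal (q0 w powr p) \<partial>S) = enn2real (ennreal (K powr p) * (\<integral>\<^sup>+ w. ennreal (q0 w powr p) \<partial>S))"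
      by (simp add: enn2real_mult)
    also have "\<dots> \<le> enn2real (\<integral>\<^sup>+ ew. ennreal (q (fst ew) (snd ew) powr p) \<partial>(R \<Otimes>\<^sub>M S))"
      using main_nn fin by (intro enn2real_mono) auto
    finally show ?thesis unfolding LL RR .
  qed
  have L0: "(\<integral>w. q0 w powr p \<partial>S) \<ge> 0" by (intro integral_nonneg_AE) auto
  have "(\<integral>w. q0 w powr p \<partial>S) powr (1 / p) \<le> sqrt (exp 1 * real m) * (\<integral>ew. q (fst ew) (snd ew) powr p \<partial>(R \<Otimes>\<^sub>M S)) powr (1 / p)"
    using final_ineq[OF K0 L0 p KLR] Kbound[OF m1] by (simp add: K_def s_def c_def)
  then show ?thesis unfolding lhs_eq rhs_eq .
qed

end
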